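(* Let $C\subset\mathbb{R}^n$ be a pointed, $n$-dimensional closed convex cone and $\Omega=S^{n-1}\cap\operatorname{int}C^{\circ}$. Let $\mu$ be a nonzero, finite Borel measure on $\Omega$, and let $(\omega_i)_{i\in\mathbb{N}}$ be compact subsets of $\Omega$ with $\omega_i\subset\operatorname{int}\omega_{i+1}$ and $\bigcup_i\omega_i=\Omega$. Let $\mu_i(\sigma)=\mu(\sigma\cap\omega_i)$ and, for $f\in C^+(\omega_i)$, $L_{\mu_i}(f)=\gamma^n([f])\exp\int_{\omega_i}\log f\,d\mu_i$, where $[f]$ is the Wulff shape associated with $(C,\omega_i,f)$. Then there exists a constant $a>0$ such that $\sup\{L_{\mu_i}(f):f\in C^+(\omega_i)\}>a$ for every $i\in\mathbb{N}$.
   Context: $C^{\circ}=\{x:\langle x,y\rangle\le 0\ \forall y\in C\}$. $C^+(\omega)$ denotes the set of continuous functions $\omega\to(0,\infty)$. For a positive continuous $h$ on a compact $\omega\subset\Omega$, the Wulff shape is $[h]=C\cap\bigcap_{u\in\omega}\{y:\langle y,u\rangle\le -h(u)\}$. $\gamma^n$ is the standard Gaussian probability measure on $\mathbb{R}^n$. *)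

theory Defs
  imports "HOL-Probability.Probability"
begin

definition polar_cone :: "'a::euclidean_space set \<Rightarrow> 'a set" where
  "polar_cone C = {x. \<forall>y\<in>C. inner x y \<le> 0}"

definition pointed :: "'a::euclidean_space set \<Rightarrow> bool" where
  "pointed C \<longleftrightarrow> C \<inter> uminus ` C = {0}"

definition Cplus :: "'a::euclidean_space set \<Rightarrow> ('a \<Rightarrow> real) set" where
  "Cplus \<omega> = {f. continuous_on \<omega> f \<and> (\<forall>u\<in>\<omega>. 0 < f u)}"

definition wulff :: "'a::euclidean_space set \<Rightarrow> 'a set \<Rightarrow> ('a \<Rightarrow> real) \<Rightarrow> 'a set" where
  "wulff C \<omega> h = C \<inter> (\<Inter>u\<in>\<omega>. {y. inner y u \<le> - h u})"

definition gauss_density :: "'a::euclidean_space \<Rightarrow> real" where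
  "gauss_density x = (2 * pi) powr (- real DIM('a) / 2) * exp (- (norm x)\<^sup>2 / 2)"

definition gaussian :: "'a::euclidean_space measure" where
  "gaussian = density lborel (\<lambda>x. ennreal (gauss_density x))"

definition L_fun :: "'a::euclidean_space set \<Rightarrow> 'a measure \<Rightarrow> 'a set \<Rightarrow> ('a \<Rightarrow> real) \<Rightarrow> real" where
  "L_fun C \<mu> \<omega> f = measure gaussian (wulff C \<omega> f) * exp (LINT u:\<omega>|\<mu>. ln (f u))"

end

theory Submission
  imports Defs
begin

lemma gauss_finite: "emeasure (gaussian :: 'a::euclidean_space measure) UNIV < \<infinity>"
proof -
  define c where "c = (2 * pi) powr (- real DIM('a) / 2)"
  have c: "c > 0" by (simp add: c_def)
  have eq: "gauss_density x = c * (\<Prod>b\<in>Basis. exp (- (x \<bullet> b)\<^sup>2 / 2))" for x :: 'a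
  proof -
    have "(norm x)\<^sup>2 = (\<Sum>b\<in>Basis. (x \<bullet> b)\<^sup>2)"
      unfolding power2_norm_eq_inner by (subst euclidean_inner) (simp add: power2_eq_square)
    then have "- (norm x)\<^sup>2 / 2 = (\<Sum>b\<in>Basis. - (x \<bullet> b)\<^sup>2 / 2)"
      by (simp add: sum_divide_distrib sum_negf)
    then show ?thesis by (simp add: gauss_density_def c_def exp_sum)
  qed
  have "emeasure (gaussian :: 'a measure) UNIV = (\<integral>\<^sup>+x. ennreal (gauss_density x) \<partial>(lborel :: 'a measure))"
    unfolding gaussian_def
    by (subst emeasure_density) (auto simp: gauss_density_def)
  also have "\<dots> = (\<integral>\<^sup>+x. ennreal c * (\<Prod>b\<in>Basis. ennreal (exp (- (x \<bullet> b)\<^sup>2 / 2))) \<partial>(lborel :: 'a measure))"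
    by (intro nn_integral_cong) (simp add: eq ennreal_mult less_imp_le[OF c] prod_ennreal prod_nonneg)
  also have "\<dots> = ennreal c * (\<integral>\<^sup>+x. (\<Prod>b\<in>(Basis::'a set). ennreal (exp (- (x \<bullet> b)\<^sup>2 / 2))) \<partial>lborel)"
    by (rule nn_integral_cmult) measurable
  also have "(\<integral>\<^sup>+x. (\<Prod>b\<in>(Basis::'a set). ennreal (exp (- (x \<bullet> b)\<^sup>2 / 2))) \<partial>lborel)
     = (\<Prod>b\<in>(Basis::'a set). (\<integral>\<^sup>+t. ennreal (exp (- t\<^sup>2 / 2)) \<partial>lborel))"
    by (rule nn_integral_lborel_prod[of "\<lambda>b t. ennreal (exp (- t\<^sup>2 / 2))"]) auto
  also have "(\<integral>\<^sup>+t. ennreal (exp (- t\<^sup>2 / 2)) \<partial>lborel) = ennreal (sqrt (2*pi)) * (\<integral>\<^sup>+t. ennreal (std_normal_density t) \<partial>lborel)"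
  proof -
    have "(\<integral>\<^sup>+t. ennreal (exp (- t\<^sup>2 / 2)) \<partial>lborel) = (\<integral>\<^sup>+t. ennreal (sqrt (2*pi)) * ennreal (std_normal_density t) \<partial>lborel)"
      by (intro nn_integral_cong) (simp add: std_normal_density_def ennreal_mult[symmetric])
    also have "\<dots> = ennreal (sqrt (2*pi)) * (\<integral>\<^sup>+t. ennreal (std_normal_density t) \<partial>lborel)"
      by (rule nn_integral_cmult) measurable
    finally show ?thesis .
  qed
  also have "(\<integral>\<^sup>+t. ennreal (std_normal_density t) \<partial>lborel) = 1"
    by (subst nn_integral_eq_integral) auto
  finally show ?thesis by (simp add: ennreal_mult_less_top power_less_top_ennreal)
qed

lemma gauss_meas_real[measurable]: "gauss_density \<in> borel_measurable borel"
  unfolding gauss_density_def[abs_def] by measurable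

lemma gauss_meas[measurable]: "(\<lambda>x. ennreal (gauss_density x)) \<in> borel_measurable borel"
  unfolding gauss_density_def by measurable

lemma gauss_ball_pos: "measure (gaussian :: 'a::euclidean_space measure) (ball z 1) > 0"
proof -
  have sg: "sets (gaussian :: 'a measure) = sets borel" by (simp add: gaussian_def)
  have fin: "emeasure (gaussian :: 'a measure) (ball z 1) < \<infinity>"
  proof -
    have "emeasure (gaussian :: 'a measure) (ball z 1) \<le> emeasure (gaussian :: 'a measure) UNIV"
      by (rule emeasure_mono) (auto simp: sg)
    then show ?thesis using gauss_finite[where 'a='a] by (simp add: top.not_eq_extremum)
  qed
  have meas: "(\<lambda>x. ennreal (gauss_density x) * indicator (ball z 1) x) \<in> borel_measurable (lborel::'a measure)"
    unfolding measurable_lborel1 by (intro borel_measurable_times_ennreal borel_measurable_indicator) (auto simp: gauss_meas)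
  have gpos: "gauss_density x > 0" for x :: 'a by (simp add: gauss_density_def)
  have gpos2: "\<not> gauss_density x \<le> 0" for x :: 'a using gpos[of x] by linarith
  have "emeasure (gaussian :: 'a measure) (ball z 1) \<noteq> 0"
  proof
    assume "emeasure (gaussian :: 'a measure) (ball z 1) = 0"
    then have "(\<integral>\<^sup>+x. ennreal (gauss_density x) * indicator (ball z 1) x \<partial>(lborel::'a measure)) = 0"
      unfolding gaussian_def by (simp add: emeasure_density gauss_meas)
    then have "AE x in (lborel::'a measure). ennreal (gauss_density x) * indicator (ball z 1) x = 0"
      using nn_integral_0_iff_AE[OF meas] by simp
    then have "AE x in (lborel::'a measure). x \<notin> ball z 1"
      by eventually_elim (auto simp: indicator_def ennreal_eq_0_iff gpos2 split: if_splits)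
    then have "emeasure (lborel::'a measure) (ball z 1) = 0"
    proof -
      have e: "{x \<in> space (lborel::'a measure). \<not> (x \<notin> ball z 1)} = ball z 1" by auto
      have "ball z 1 \<in> sets (lborel::'a measure)" by simp
      from AE_iff_measurable[OF this e] \<open>AE x in (lborel::'a measure). x \<notin> ball z 1\<close> show ?thesis by simp
    qed
    moreover have "emeasure (lborel::'a measure) (ball z 1) = ennreal (Sigma_Algebra.measure (lborel::'a measure) (ball z 1))"
      using emeasure_lborel_ball_finite[of z 1] by (simp add: emeasure_eq_ennreal_measure)
    ultimately show False using content_ball_pos[of 1 z] by simp
  qed
  then show ?thesis using fin
    by (simp add: emeasure_eq_ennreal_measure zero_less_measure_iff)
qed

lemma gauss_finite_measure: "finite_measure (gaussian :: 'a::euclidean_space measure)"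
  using gauss_finite[where 'a='a] by (intro finite_measureI) (simp add: gaussian_def)

lemma main_bound:
  fixes C :: "'a::euclidean_space set"
  assumes "closed C" "cone C" "y \<in> interior C"
  shows "\<exists>z. \<forall>\<omega>. \<omega> \<subseteq> sphere 0 1 \<inter> polar_cone C \<longrightarrow> ball z 1 \<subseteq> wulff C \<omega> (\<lambda>_. 1)"
proof -
  obtain r where r: "r > 0" "cball y r \<subseteq> C"
    using assms(3) open_contains_cball[of "interior C"] interior_subset by blast
  define z where "z = (2 / r) *\<^sub>R y"
  have "ball z 1 \<subseteq> wulff C \<omega> (\<lambda>_. 1)" if om: "\<omega> \<subseteq> sphere 0 1 \<inter> polar_cone C" for \<omega>
  proof
    fix x assume x: "x \<in> ball z 1"
    define w where "w = (r/2) *\<^sub>R x"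
    have xw: "x = (2/r) *\<^sub>R w" using r by (simp add: w_def)
    have "dist y w = (r/2) * dist z x"
    proof -
      have "y - w = (r/2) *\<^sub>R (z - x)" using r by (simp add: w_def z_def algebra_simps)
      then show ?thesis using r by (simp add: dist_norm)
    qed
    also have "\<dots> < r/2 * 1" using x r by (intro mult_strict_left_mono) auto
    finally have "dist y w < r/2" by simp
    then have "w \<in> cball y r" using r zero_le_dist[of y w] unfolding mem_cball by linarith
    then have "w \<in> C" using r by blast
    then have xC: "x \<in> C" using assms(2) r xw by (simp add: cone_def)
    have "inner x u \<le> - 1" if u: "u \<in> \<omega>" for u
    proof -
      have u1: "norm u = 1" and up: "\<forall>v\<in>C. inner u v \<le> 0"
        using u om by (auto simp: polar_cone_def)
      have "y + r *\<^sub>R u \<in> cball y r" using u1 r by (simp add: dist_norm)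
      then have "inner u (y + r *\<^sub>R u) \<le> 0" using up r by blast
      then have yu: "inner y u \<le> - r" using u1 by (simp add: inner_add_right inner_commute power2_norm_eq_inner[symmetric])
      have zu: "inner z u \<le> -2" using yu r by (simp add: z_def field_simps)
      have "inner (x - z) u \<le> norm (x - z) * norm u" by (rule norm_cauchy_schwarz)
      also have "\<dots> < 1" using x u1 by (simp add: dist_norm norm_minus_commute)
      finally show ?thesis using zu by (simp add: inner_diff_left)
    qed
    then show "x \<in> wulff C \<omega> (\<lambda>_. 1)" using xC by (auto simp: wulff_def)
  qed
  then show ?thesis by blast
qed

lemma closed_wulff1: "closed C \<Longrightarrow> closed (wulff C \<omega> (\<lambda>_. 1))"
  unfolding wulff_def
  by (intro closed_Int closed_INT allI ballI closed_Collect_le continuous_intros) auto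

theorem lemma7p2:
  fixes C :: "'a::euclidean_space set"
    and \<Omega> :: "'a set"
    and \<mu> :: "'a measure"
    and \<omega> :: "nat \<Rightarrow> 'a set"
  assumes "closed C" and "convex C" and "cone C" and "pointed C"
    and "aff_dim C = int DIM('a)"
    and "\<Omega> = sphere 0 1 \<inter> interior (polar_cone C)"
    and "sets \<mu> = sets (restrict_space borel \<Omega>)"
    and "finite_measure \<mu>"
    and "emeasure \<mu> (space \<mu>) \<noteq> 0"
    and "\<And>i. compact (\<omega> i)"
    and "\<And>i. \<omega> i \<subseteq> \<Omega>"
    and "\<And>i. \<exists>U. openin (top_of_set \<Omega>) U \<and> \<omega> i \<subseteq> U \<and> U \<subseteq> \<omega> (Suc i)"
    and "(\<Union>i. \<omega> i) = \<Omega>"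
  shows "\<exists>a>0. \<forall>i. (SUP f\<in>Cplus (\<omega> i). ereal (L_fun C \<mu> (\<omega> i) f)) > ereal a"
proof -
  have "C \<noteq> {}" using assms(5) by auto
  then have "rel_interior C \<noteq> {}" using assms(2) by (simp add: rel_interior_eq_empty)
  then obtain y where y: "y \<in> interior C"
    using interior_rel_interior_gen[of C] assms(5) by auto
  obtain z where z: "\<And>\<omega>'. \<omega>' \<subseteq> sphere 0 1 \<inter> polar_cone C \<Longrightarrow> ball z 1 \<subseteq> wulff C \<omega>' (\<lambda>_. 1)"
    using main_bound[OF assms(1) assms(3) y] by blast
  define a where "a = measure (gaussian :: 'a measure) (ball z 1) / 2"
  have a0: "a > 0" using gauss_ball_pos[of z] by (simp add: a_def)
  have "ereal a < (SUP f\<in>Cplus (\<omega> i). ereal (L_fun C \<mu> (\<omega> i) f))" for i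
  proof -
    have sub: "\<omega> i \<subseteq> sphere 0 1 \<inter> polar_cone C"
      using assms(6) assms(11)[of i] interior_subset[of "polar_cone C"] by blast
    have "measure (gaussian :: 'a measure) (ball z 1) \<le> measure gaussian (wulff C (\<omega> i) (\<lambda>_. 1))"
      using z[OF sub] closed_wulff1[OF assms(1), of "\<omega> i"]
      by (intro finite_measure.finite_measure_mono[OF gauss_finite_measure])
         (auto simp: gaussian_def)
    then have "a < L_fun C \<mu> (\<omega> i) (\<lambda>_. 1)"
      using a0 by (simp add: L_fun_def a_def)
    moreover have "(\<lambda>_. 1) \<in> Cplus (\<omega> i)" by (simp add: Cplus_def)
    then have "ereal (L_fun C \<mu> (\<omega> i) (\<lambda>_. 1)) \<le> (SUP f\<in>Cplus (\<omega> i). ereal (L_fun C \<mu> (\<omega> i) f))"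
      by (rule SUP_upper)
    moreover have "ereal a < ereal (L_fun C \<mu> (\<omega> i) (\<lambda>_. 1))" using \<open>a < L_fun C \<mu> (\<omega> i) (\<lambda>_. 1)\<close> by simp
    ultimately show ?thesis by (metis less_le_trans)
  qed
  then show ?thesis using a0 by blast
qed

end
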